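(* Let $k\ge1$. For every integer $m\ge1$ and every $z\in\mathbb{C}P^k\setminus\mathbb{R}P^k$, $$M^m_{\mathbb{C}P^k}(z)\le\frac{4\,m!\,(k+1)}{1-\|\tau(z)\|}.$$
   Context: Equip $\mathcal O_{\mathbb{C}P^k}(1)$ with its standard Hermitian metric, so that a linear form $\sigma$ has pointwise norm $\|\sigma(z)\|=|\sigma(z)|/|z|$, and $\mathcal O(2)$ with the induced metric. The space $\mathbb{R}H^0(\mathbb{C}P^k,\mathcal O(1))$ of real linear forms carries the Euclidean structure for which $\sigma_i(z)=\sqrt{k+1}\,z_i$, $i=0,\dots,k$, is an orthonormal basis (this is the $L^2$ product for the normalized Fubini–Study volume), and $\mu$ is the Gaussian measure: for $\sigma_a=\sum a_i\sigma_i$, $a\in\mathbb{R}^{k+1}$ has density $\pi^{-(k+1)/2}e^{-|a|^2}$. Define $M^m_{\mathbb{C}P^k}(z)=\int|\log\|\sigma(z)\|^2|^m\,d\mu(\sigma)$. Let $\tau$ be the section of $\mathcal O(2)$ given by $\tau(z)=z_0^2+\dots+z_k^2$, so $\|\tau(z)\|=|z_0^2+\dots+z_k^2|/|z|^2$. *)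

theory Defs
  imports "HOL-Analysis.Analysis"
begin

text \<open>Homogeneous coordinates: a point of CP^k is represented by a nonzero vector
  z in C^(k+1), with k+1 = CARD('n).\<close>

definition lin_form :: "real^'n \<Rightarrow> complex^'n \<Rightarrow> complex" where
  "lin_form a z = (\<Sum>i\<in>UNIV. complex_of_real (a$i) * complex_of_real (sqrt (real CARD('n))) * z$i)"

text \<open>Pointwise norm of a section of O(1): |sigma(z)| / |z|.\<close>
definition sec_norm :: "real^'n \<Rightarrow> complex^'n \<Rightarrow> real" where
  "sec_norm a z = cmod (lin_form a z) / norm z"

definition gauss_density :: "real^'n \<Rightarrow> real" where
  "gauss_density a = pi powr (- (real CARD('n) / 2)) * exp (- ((norm a)^2))"

definition M_CP :: "nat \<Rightarrow> complex^'n \<Rightarrow> ennreal" where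
  "M_CP m z = (\<integral>\<^sup>+ a. ennreal (gauss_density a * \<bar>ln ((sec_norm a z)^2)\<bar> ^ m) \<partial>lborel)"

definition tau_norm :: "complex^'n \<Rightarrow> real" where
  "tau_norm z = cmod (\<Sum>i\<in>UNIV. (z$i)^2) / (norm z)^2"

definition real_point :: "complex^'n \<Rightarrow> bool" where
  "real_point z \<longleftrightarrow> (\<exists>c::complex. \<exists>x::real^'n. z = c *s (\<chi> i. complex_of_real (x$i)))"

end

theory Submission
  imports Defs "HOL-Probability.Probability"
begin


definition gw :: "real \<Rightarrow> real" where "gw s = exp (- s\<^sup>2) / sqrt pi"

lemma gw_nd: "gw = normal_density 0 (1 / sqrt 2)"
  by (auto simp: fun_eq_iff gw_def normal_density_def power_divide real_sqrt_divide)

lemma gw_nonneg[simp]: "0 \<le> gw s" by (simp add: gw_def)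
lemma gw_le: "gw s \<le> 1 / sqrt pi"
  by (simp add: gw_def divide_right_mono)
lemma gw_meas[measurable]: "gw \<in> borel_measurable borel" unfolding gw_def by measurable

lemma gw_int1: "has_bochner_integral lborel gw 1"
proof -
  have "integrable lborel gw" unfolding gw_nd by simp
  moreover have "integral\<^sup>L lborel gw = 1" unfolding gw_nd by simp
  ultimately show ?thesis by (metis has_bochner_integral_integrable)
qed

lemma gw_intx: "has_bochner_integral lborel (\<lambda>s. gw s * s) 0"
  using normal_moment_nz_1[where \<mu>=0 and \<sigma>="1/sqrt 2"] unfolding gw_nd by simp

lemma gw_intx2: "has_bochner_integral lborel (\<lambda>s. gw s * s\<^sup>2) (1/2)"
  using normal_moment_even[where k=1 and \<mu>=0 and \<sigma>="1/sqrt 2"] unfolding gw_nd by (simp add: power2_eq_square)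

lemma gw_nn0: "(\<integral>\<^sup>+ s. ennreal (gw s) \<partial>lborel) = 1"
  using gw_int1 by (subst nn_integral_eq_integral) (auto simp: has_bochner_integral_iff)

lemma gw_nn2: "(\<integral>\<^sup>+ s. ennreal (gw s * (c + s * p)\<^sup>2) \<partial>lborel) = ennreal (c\<^sup>2 + p\<^sup>2 / 2)"
proof -
  have h: "has_bochner_integral lborel (\<lambda>s. c\<^sup>2 * gw s + (2*c*p) * (gw s * s) + p\<^sup>2 * (gw s * s\<^sup>2))
     (c\<^sup>2 * 1 + (2*c*p) * 0 + p\<^sup>2 * (1/2))"
    by (intro has_bochner_integral_add has_bochner_integral_mult_right gw_int1 gw_intx gw_intx2)
  have e: "(\<lambda>s. c\<^sup>2 * gw s + (2*c*p) * (gw s * s) + p\<^sup>2 * (gw s * s\<^sup>2)) = (\<lambda>s. gw s * (c + s * p)\<^sup>2)"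
    by (auto simp: fun_eq_iff power2_eq_square algebra_simps)
  show ?thesis using h unfolding e
    by (subst nn_integral_eq_integral) (auto simp: has_bochner_integral_iff)
qed

interpretation lb: product_sigma_finite "\<lambda>_. lborel :: real measure" by standard

lemma large_sq:
  assumes "finite I"
  shows "(\<integral>\<^sup>+ f. ennreal ((\<Prod>l\<in>I. gw (f l)) * (c + (\<Sum>l\<in>I. f l * p l))\<^sup>2) \<partial>PiM I (\<lambda>_. lborel))
     = ennreal (c\<^sup>2 + (\<Sum>l\<in>I. (p l)\<^sup>2) / 2)"
  using assms
proof (induction I arbitrary: c rule: finite_induct)
  case empty
  show ?case by (simp add: PiM_empty nn_integral_count_space_finite)
next
  case (insert i I)
  have "(\<integral>\<^sup>+ f. ennreal ((\<Prod>l\<in>insert i I. gw (f l)) * (c + (\<Sum>l\<in>insert i I. f l * p l))\<^sup>2) \<partial>PiM (insert i I) (\<lambda>_. lborel))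
    = (\<integral>\<^sup>+ y. (\<integral>\<^sup>+ x. ennreal ((\<Prod>l\<in>insert i I. gw ((x(i:=y)) l)) * (c + (\<Sum>l\<in>insert i I. (x(i:=y)) l * p l))\<^sup>2) \<partial>PiM I (\<lambda>_. lborel)) \<partial>lborel)"
    by (rule lb.product_nn_integral_insert_rev) (use insert in auto)
  also have "\<dots> = (\<integral>\<^sup>+ y. ennreal (gw y) * (\<integral>\<^sup>+ x. ennreal ((\<Prod>l\<in>I. gw (x l)) * ((c + y * p i) + (\<Sum>l\<in>I. x l * p l))\<^sup>2) \<partial>PiM I (\<lambda>_. lborel)) \<partial>lborel)"
  proof (rule nn_integral_cong)
    fix y
    have "(\<integral>\<^sup>+ x. ennreal ((\<Prod>l\<in>insert i I. gw ((x(i:=y)) l)) * (c + (\<Sum>l\<in>insert i I. (x(i:=y)) l * p l))\<^sup>2) \<partial>PiM I (\<lambda>_. lborel))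
      = (\<integral>\<^sup>+ x. ennreal (gw y) * ennreal ((\<Prod>l\<in>I. gw (x l)) * ((c + y * p i) + (\<Sum>l\<in>I. x l * p l))\<^sup>2) \<partial>PiM I (\<lambda>_. lborel))"
    proof (rule nn_integral_cong)
      fix x
      have "(\<Prod>l\<in>I. gw ((x(i:=y)) l)) = (\<Prod>l\<in>I. gw (x l))"
        using insert by (intro prod.cong) auto
      moreover have "(\<Sum>l\<in>I. (x(i:=y)) l * p l) = (\<Sum>l\<in>I. x l * p l)"
        using insert by (intro sum.cong) auto
      ultimately show "ennreal ((\<Prod>l\<in>insert i I. gw ((x(i:=y)) l)) * (c + (\<Sum>l\<in>insert i I. (x(i:=y)) l * p l))\<^sup>2)
        = ennreal (gw y) * ennreal ((\<Prod>l\<in>I. gw (x l)) * ((c + y * p i) + (\<Sum>l\<in>I. x l * p l))\<^sup>2)"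
        using insert by (simp add: ennreal_mult'[symmetric] prod_nonneg algebra_simps)
    qed
    also have "\<dots> = ennreal (gw y) * (\<integral>\<^sup>+ x. ennreal ((\<Prod>l\<in>I. gw (x l)) * ((c + y * p i) + (\<Sum>l\<in>I. x l * p l))\<^sup>2) \<partial>PiM I (\<lambda>_. lborel))"
      by (rule nn_integral_cmult) measurable
    finally show "(\<integral>\<^sup>+ x. ennreal ((\<Prod>l\<in>insert i I. gw ((x(i:=y)) l)) * (c + (\<Sum>l\<in>insert i I. (x(i:=y)) l * p l))\<^sup>2) \<partial>PiM I (\<lambda>_. lborel))
      = ennreal (gw y) * (\<integral>\<^sup>+ x. ennreal ((\<Prod>l\<in>I. gw (x l)) * ((c + y * p i) + (\<Sum>l\<in>I. x l * p l))\<^sup>2) \<partial>PiM I (\<lambda>_. lborel))" .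
  qed
  also have "\<dots> = (\<integral>\<^sup>+ y. ennreal (gw y * (c + y * p i)\<^sup>2) + ennreal (gw y) * ennreal ((\<Sum>l\<in>I. (p l)\<^sup>2) / 2) \<partial>lborel)"
    by (intro nn_integral_cong, subst insert.IH) (simp add: ennreal_mult'[symmetric] sum_nonneg algebra_simps flip: ennreal_plus)
  also have "\<dots> = ennreal (c\<^sup>2 + (p i)\<^sup>2 / 2) + ennreal ((\<Sum>l\<in>I. (p l)\<^sup>2) / 2)"
    by (subst nn_integral_add) (auto simp: gw_nn2 nn_integral_multc gw_nn0)
  also have "\<dots> = ennreal (c\<^sup>2 + (\<Sum>l\<in>insert i I. (p l)\<^sup>2) / 2)"
    using insert by (simp add: sum_nonneg add_divide_distrib flip: ennreal_plus)
  finally show ?case .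
qed

definition Lf :: "nat \<Rightarrow> real \<Rightarrow> real" where
  "Lf m y = (if 0 < y \<and> y < 1 then (- ln y) ^ m else 0)"

lemma Lf_nonneg[simp]: "0 \<le> Lf m y" by (simp add: Lf_def)
lemma Lf_meas[measurable]: "Lf m \<in> borel_measurable borel" unfolding Lf_def by measurable

lemma Lf_anti: assumes "0 < y'" "y' \<le> y" shows "Lf m y \<le> Lf m y'"
  using assms by (auto simp: Lf_def intro!: power_mono)

fun Phi :: "nat \<Rightarrow> real \<Rightarrow> real" where
  "Phi 0 w = w"
| "Phi (Suc m) w = w * (- ln w) ^ Suc m + real (Suc m) * Phi m w"

lemma Phi_deriv: "0 < w \<Longrightarrow> DERIV (Phi m) w :> (- ln w) ^ m"
proof (induction m)
  case 0 then show ?case by (auto intro!: derivative_eq_intros)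
next
  case (Suc m)
  have d1: "DERIV (\<lambda>w. - ln w) w :> - (1 / w)" using Suc.prems by (auto intro!: derivative_eq_intros)
  have d2: "DERIV (\<lambda>w. (- ln w) ^ Suc m) w :> of_nat (Suc m) * (- (1 / w) * (- ln w) ^ m)"
    using DERIV_power[OF d1, of "Suc m"] by simp
  have "DERIV (\<lambda>w. w * (- ln w) ^ Suc m + real (Suc m) * Phi m w) w :> (- ln w) ^ Suc m"
    by (rule DERIV_cong[OF DERIV_add[OF DERIV_mult[OF DERIV_ident d2] DERIV_cmult[OF Suc.IH[OF Suc.prems]]]])
       (use Suc.prems in \<open>simp add: field_simps\<close>)
  then show ?case by simp
qed

lemma Phi_1: "Phi m 1 = fact m"
  by (induction m) auto

lemma Phi_nonneg: assumes "0 < w" "w \<le> 1" shows "0 \<le> Phi m w"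
proof -
  have "0 \<le> - ln w" using assms by simp
  then show ?thesis using assms by (induction m) (auto intro!: add_nonneg_nonneg mult_nonneg_nonneg zero_le_power simp del: power_Suc)
qed

lemma half_logint:
  assumes k: "0 < \<kappa>" and m: "1 \<le> m"
  shows "(\<integral>\<^sup>+ u. ennreal (2 * u * Lf m (\<kappa> * u\<^sup>2)) * indicator {0<..} u \<partial>lborel) \<le> ennreal (fact m / \<kappa>)"
proof -
  define b where "b = 1 / sqrt \<kappa>"
  have b: "0 < b" "\<kappa> * b\<^sup>2 = 1" using k by (auto simp: b_def power_divide)
  define F where "F u = Phi m (\<kappa> * u\<^sup>2) / \<kappa>" for u
  define g where "g u = 2 * u * (- ln (\<kappa> * u\<^sup>2)) ^ m" for u
  define f where "f k u = ennreal (g u) * indicator {b / Suc k .. b} u" for k u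
  have [measurable]: "g \<in> borel_measurable borel" unfolding g_def by measurable
  have lim: "(\<lambda>k. integral\<^sup>N lborel (f k)) \<longlonglongrightarrow> (\<integral>\<^sup>+ u. ennreal (2 * u * Lf m (\<kappa> * u\<^sup>2)) * indicator {0<..} u \<partial>lborel)"
  proof (rule nn_integral_LIMSEQ)
    show "incseq f"
    proof (intro incseq_SucI le_funI)
      fix k u
      have "b / Suc (Suc k) \<le> b / Suc k" using b by (intro divide_left_mono) auto
      then show "f k u \<le> f (Suc k) u" unfolding f_def by (auto split: split_indicator)
    qed
    show "\<And>k. f k \<in> borel_measurable lborel" unfolding f_def by measurable
    fix u
    show "(\<lambda>k. f k u) \<longlonglongrightarrow> ennreal (2 * u * Lf m (\<kappa> * u\<^sup>2)) * indicator {0<..} u"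
    proof (cases "0 < u \<and> u \<le> b")
      case True
      then obtain N where N: "b / u < real N" using reals_Archimedean2 by blast
      have ev: "\<forall>k\<ge>N. f k u = ennreal (2 * u * Lf m (\<kappa> * u\<^sup>2)) * indicator {0<..} u"
      proof (intro allI impI)
        fix k assume "N \<le> k"
        then have "b / u < real (Suc k)" using N by simp
        then have "b / Suc k \<le> u" using True by (simp add: field_simps)
        moreover have "g u = 2 * u * Lf m (\<kappa> * u\<^sup>2)"
        proof (cases "u = b")
          case True then show ?thesis using b m by (simp add: g_def Lf_def)
        next
          case False
          with \<open>0 < u \<and> u \<le> b\<close> have "u < b" by simp
          then have "\<kappa> * u\<^sup>2 < \<kappa> * b\<^sup>2" using k True by (intro mult_strict_left_mono power_strict_mono) auto
          then show ?thesis using b k True by (simp add: g_def Lf_def)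
        qed
        ultimately show "f k u = ennreal (2 * u * Lf m (\<kappa> * u\<^sup>2)) * indicator {0<..} u"
          using True by (simp add: f_def indicator_def)
      qed
      show ?thesis by (rule tendsto_eventually) (use ev in \<open>auto simp: eventually_sequentially\<close>)
    next
      case False
      have fk0: "f k u = 0" for k
      proof -
        have "b / Suc k > 0" using b by simp
        then show ?thesis using False by (auto simp: f_def indicator_def)
      qed
      have z: "ennreal (2 * u * Lf m (\<kappa> * u\<^sup>2)) * indicator {0<..} u = 0"
      proof (cases "0 < u")
        case True
        with False have "b < u" by simp
        then have "\<kappa> * b\<^sup>2 < \<kappa> * u\<^sup>2" using k b by (intro mult_strict_left_mono power_strict_mono) auto
        then show ?thesis using b by (simp add: Lf_def)
      qed simp
      show ?thesis by (subst z, simp add: fk0)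
    qed
  qed
  have bnd: "integral\<^sup>N lborel (f k) \<le> ennreal (fact m / \<kappa>)" for k
  proof -
    have e: "b / Suc k > 0" using b by simp
    have le: "b / Suc k \<le> b" using b by (simp add: divide_le_eq)
    have "integral\<^sup>N lborel (f k) = ennreal (F b - F (b / Suc k))"
      unfolding f_def
    proof (rule nn_integral_FTC_Icc)
      fix u assume u: "u \<in> {b / Suc k .. b}"
      then have u0: "0 < u" using e by simp
      then have "0 < \<kappa> * u\<^sup>2" using k by simp
      have "DERIV (\<lambda>u. Phi m (\<kappa> * u\<^sup>2) / \<kappa>) u :> (- ln (\<kappa> * u\<^sup>2)) ^ m * (\<kappa> * (2 * u)) / \<kappa>"
      proof -
        have d0: "DERIV (\<lambda>u. \<kappa> * u\<^sup>2) u :> \<kappa> * (2 * u)" by (auto intro!: derivative_eq_intros)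
        show ?thesis by (rule DERIV_cdivide[OF DERIV_chain2[OF Phi_deriv[OF \<open>0 < \<kappa> * u\<^sup>2\<close>] d0]])
      qed
      then show "DERIV F u :> g u" using k unfolding F_def g_def by (simp add: field_simps)
      have "\<kappa> * u\<^sup>2 \<le> \<kappa> * b\<^sup>2" using u u0 k by (intro mult_left_mono power_mono) auto
      then have "0 \<le> - ln (\<kappa> * u\<^sup>2)" using b \<open>0 < \<kappa> * u\<^sup>2\<close> by simp
      then show "0 \<le> g u" using u0 by (simp add: g_def)
    qed (use le in auto)
    also have "\<dots> \<le> ennreal (F b)"
    proof -
      have "0 < \<kappa> * (b / Suc k)\<^sup>2" by (intro mult_pos_pos zero_less_power) (use k e in auto)
      moreover have "\<kappa> * (b / Suc k)\<^sup>2 \<le> \<kappa> * b\<^sup>2" using k e le by (intro mult_left_mono power_mono) auto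
      ultimately have "0 \<le> F (b / Suc k)" using b k unfolding F_def by (intro divide_nonneg_pos Phi_nonneg) auto
      then show ?thesis by (intro ennreal_leI) simp
    qed
    also have "F b = fact m / \<kappa>" using b by (simp add: F_def Phi_1)
    finally show ?thesis .
  qed
  show ?thesis by (rule LIMSEQ_le_const2[OF lim]) (use bnd in auto)
qed

lemma full_logint:
  assumes k: "0 < \<kappa>" and m: "1 \<le> m"
  shows "(\<integral>\<^sup>+ u. ennreal (2 * \<bar>u\<bar> * Lf m (\<kappa> * u\<^sup>2)) \<partial>lborel) \<le> ennreal (2 * fact m / \<kappa>)"
proof -
  define h where "h u = ennreal (2 * u * Lf m (\<kappa> * u\<^sup>2)) * indicator {0<..} u" for u
  have [measurable]: "h \<in> borel_measurable borel" unfolding h_def by measurable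
  have pw: "ennreal (2 * \<bar>u\<bar> * Lf m (\<kappa> * u\<^sup>2)) = h u + h (0 + (-1) * u)" for u
    by (cases "0 < u") (auto simp: h_def indicator_def)
  have "(\<integral>\<^sup>+ u. ennreal (2 * \<bar>u\<bar> * Lf m (\<kappa> * u\<^sup>2)) \<partial>lborel) = (\<integral>\<^sup>+ u. h u \<partial>lborel) + (\<integral>\<^sup>+ u. h (0 + (-1) * u) \<partial>lborel)"
    unfolding pw by (rule nn_integral_add) auto
  also have "(\<integral>\<^sup>+ u. h (0 + (-1) * u) \<partial>lborel) = (\<integral>\<^sup>+ u. h u \<partial>lborel)"
    using nn_integral_real_affine[of h "-1" 0] by simp
  also have "(\<integral>\<^sup>+ u. h u \<partial>lborel) \<le> ennreal (fact m / \<kappa>)"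
    unfolding h_def by (rule half_logint[OF k m])
  finally have "(\<integral>\<^sup>+ u. ennreal (2 * \<bar>u\<bar> * Lf m (\<kappa> * u\<^sup>2)) \<partial>lborel) \<le> ennreal (fact m / \<kappa>) + ennreal (fact m / \<kappa>)"
    by (meson add_mono order_trans order_refl)
  also have "\<dots> = ennreal (2 * fact m / \<kappa>)" using k by (simp flip: ennreal_plus)
  finally show ?thesis .
qed

lemma twoD_logint:
  assumes k: "0 < \<kappa>" and m: "1 \<le> m"
  shows "(\<integral>\<^sup>+ u. \<integral>\<^sup>+ v. ennreal (Lf m (\<kappa> * (u\<^sup>2 + v\<^sup>2))) \<partial>lborel \<partial>lborel) \<le> ennreal (4 * fact m / \<kappa>)"
proof -
  define A where "A u v = ennreal (Lf m (\<kappa> * u\<^sup>2)) * (if \<bar>v\<bar> \<le> \<bar>u\<bar> then 1 else 0)" for u v :: real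
  have [measurable]: "case_prod A \<in> borel_measurable (lborel \<Otimes>\<^sub>M lborel)" unfolding A_def by measurable
  have pw: "ennreal (Lf m (\<kappa> * (u\<^sup>2 + v\<^sup>2))) \<le> A u v + A v u" for u v
  proof (cases "\<bar>v\<bar> \<le> \<bar>u\<bar>")
    case True
    have "Lf m (\<kappa> * (u\<^sup>2 + v\<^sup>2)) \<le> Lf m (\<kappa> * u\<^sup>2)"
    proof (cases "u = 0")
      case True then show ?thesis using \<open>\<bar>v\<bar> \<le> \<bar>u\<bar>\<close> by (simp add: Lf_def)
    next
      case False then show ?thesis using k by (intro Lf_anti) auto
    qed
    then have "ennreal (Lf m (\<kappa> * (u\<^sup>2 + v\<^sup>2))) \<le> A u v" using True by (simp add: A_def indicator_def)
    then show ?thesis by (meson add_increasing2 order_trans zero_le)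
  next
    case False
    then have "\<bar>u\<bar> \<le> \<bar>v\<bar>" by simp
    have "Lf m (\<kappa> * (u\<^sup>2 + v\<^sup>2)) \<le> Lf m (\<kappa> * v\<^sup>2)"
      using False k by (intro Lf_anti) auto
    then have "ennreal (Lf m (\<kappa> * (u\<^sup>2 + v\<^sup>2))) \<le> A v u" using \<open>\<bar>u\<bar> \<le> \<bar>v\<bar>\<close> by (simp add: A_def indicator_def)
    then show ?thesis by (meson add_increasing order_trans zero_le)
  qed
  have inner: "(\<integral>\<^sup>+ v. A u v \<partial>lborel) = ennreal (2 * \<bar>u\<bar> * Lf m (\<kappa> * u\<^sup>2))" for u
  proof -
    have "(\<integral>\<^sup>+ v. A u v \<partial>lborel) = (\<integral>\<^sup>+ v. ennreal (Lf m (\<kappa> * u\<^sup>2)) * indicator {-\<bar>u\<bar>..\<bar>u\<bar>} v \<partial>lborel)"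
      unfolding A_def by (intro nn_integral_cong) (auto simp: indicator_def)
    also have "\<dots> = ennreal (Lf m (\<kappa> * u\<^sup>2)) * emeasure lborel {-\<bar>u\<bar>..\<bar>u\<bar>}"
      by (rule nn_integral_cmult_indicator) simp
    also have "\<dots> = ennreal (Lf m (\<kappa> * u\<^sup>2)) * ennreal (2 * \<bar>u\<bar>)" by simp
    finally show ?thesis by (simp add: ennreal_mult'[symmetric] mult_ac)
  qed
  have "(\<integral>\<^sup>+ u. \<integral>\<^sup>+ v. ennreal (Lf m (\<kappa> * (u\<^sup>2 + v\<^sup>2))) \<partial>lborel \<partial>lborel) \<le> (\<integral>\<^sup>+ u. \<integral>\<^sup>+ v. A u v + A v u \<partial>lborel \<partial>lborel)"
    by (intro nn_integral_mono pw)
  also have "\<dots> = (\<integral>\<^sup>+ u. (\<integral>\<^sup>+ v. A u v \<partial>lborel) + (\<integral>\<^sup>+ v. A v u \<partial>lborel) \<partial>lborel)"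
    by (intro nn_integral_cong nn_integral_add) auto
  also have "\<dots> = (\<integral>\<^sup>+ u. (\<integral>\<^sup>+ v. A u v \<partial>lborel) \<partial>lborel) + (\<integral>\<^sup>+ u. (\<integral>\<^sup>+ v. A v u \<partial>lborel) \<partial>lborel)"
    by (rule nn_integral_add) auto
  also have "\<dots> = (\<integral>\<^sup>+ u. ennreal (2 * \<bar>u\<bar> * Lf m (\<kappa> * u\<^sup>2)) \<partial>lborel) + (\<integral>\<^sup>+ u. ennreal (2 * \<bar>u\<bar> * Lf m (\<kappa> * u\<^sup>2)) \<partial>lborel)"
  proof -
    have "(\<integral>\<^sup>+ u. (\<integral>\<^sup>+ v. A v u \<partial>lborel) \<partial>lborel) = (\<integral>\<^sup>+ v. (\<integral>\<^sup>+ u. A v u \<partial>lborel) \<partial>lborel)"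
      by (rule lborel_pair.Fubini') measurable
    then show ?thesis by (simp add: inner)
  qed
  also have "\<dots> \<le> ennreal (2 * fact m / \<kappa>) + ennreal (2 * fact m / \<kappa>)"
    by (intro add_mono full_logint k m)
  also have "\<dots> = ennreal (4 * fact m / \<kappa>)" using k by (simp flip: ennreal_plus)
  finally show ?thesis .
qed

lemma affine2:
  fixes F :: "real \<Rightarrow> real \<Rightarrow> ennreal"
  assumes Fm[measurable]: "case_prod F \<in> borel_measurable (lborel \<Otimes>\<^sub>M lborel)"
    and a: "a \<noteq> 0" and D: "a * d - b * c \<noteq> 0"
  shows "ennreal \<bar>a * d - b * c\<bar> * (\<integral>\<^sup>+ t. \<integral>\<^sup>+ s. F (a * s + b * t + c1) (c * s + d * t + c2) \<partial>lborel \<partial>lborel)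
     = (\<integral>\<^sup>+ u. \<integral>\<^sup>+ v. F u v \<partial>lborel \<partial>lborel)"
proof -
  define e1 where "e1 = (a * d - b * c) / a"
  define e2 where "e2 x = c * (x - c1) / a + c2" for x
  have e1: "e1 \<noteq> 0" using a D by (simp add: e1_def)
  have m1[measurable]: "(\<lambda>(x, t). F x (e1 * t + e2 x)) \<in> borel_measurable (lborel \<Otimes>\<^sub>M lborel)"
    unfolding e2_def by measurable
  have step1: "(\<integral>\<^sup>+ x. F x (e1 * t + e2 x) \<partial>lborel) = ennreal \<bar>a\<bar> * (\<integral>\<^sup>+ s. F (a * s + b * t + c1) (c * s + d * t + c2) \<partial>lborel)" for t
  proof -
    have [measurable]: "(\<lambda>x. F x (e1 * t + e2 x)) \<in> borel_measurable borel"
      by measurable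
    have "(\<integral>\<^sup>+ x. F x (e1 * t + e2 x) \<partial>lborel) = ennreal \<bar>a\<bar> * (\<integral>\<^sup>+ s. F (b * t + c1 + a * s) (e1 * t + e2 (b * t + c1 + a * s)) \<partial>lborel)"
      by (rule nn_integral_real_affine[OF _ a]) measurable
    also have "(\<lambda>s. F (b * t + c1 + a * s) (e1 * t + e2 (b * t + c1 + a * s))) = (\<lambda>s. F (a * s + b * t + c1) (c * s + d * t + c2))"
      using a by (auto simp: fun_eq_iff e1_def e2_def field_simps intro!: arg_cong2[where f=F])
    finally show ?thesis .
  qed
  have step2: "(\<integral>\<^sup>+ v. F x v \<partial>lborel) = ennreal \<bar>e1\<bar> * (\<integral>\<^sup>+ t. F x (e1 * t + e2 x) \<partial>lborel)" for x
  proof -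
    have [measurable]: "F x \<in> borel_measurable borel" by measurable
    have "(\<integral>\<^sup>+ v. F x v \<partial>lborel) = ennreal \<bar>e1\<bar> * (\<integral>\<^sup>+ t. F x (e2 x + e1 * t) \<partial>lborel)"
      by (rule nn_integral_real_affine[OF _ e1]) measurable
    then show ?thesis by (simp add: add.commute)
  qed
  have "ennreal \<bar>a * d - b * c\<bar> * (\<integral>\<^sup>+ t. \<integral>\<^sup>+ s. F (a * s + b * t + c1) (c * s + d * t + c2) \<partial>lborel \<partial>lborel)
     = ennreal \<bar>e1\<bar> * (ennreal \<bar>a\<bar> * (\<integral>\<^sup>+ t. \<integral>\<^sup>+ s. F (a * s + b * t + c1) (c * s + d * t + c2) \<partial>lborel \<partial>lborel))"
    using a by (simp add: e1_def abs_divide mult.assoc[symmetric] ennreal_mult'[symmetric] flip: ennreal_mult)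
  also have "ennreal \<bar>a\<bar> * (\<integral>\<^sup>+ t. \<integral>\<^sup>+ s. F (a * s + b * t + c1) (c * s + d * t + c2) \<partial>lborel \<partial>lborel)
     = (\<integral>\<^sup>+ t. \<integral>\<^sup>+ x. F x (e1 * t + e2 x) \<partial>lborel \<partial>lborel)"
    by (subst nn_integral_cmult[symmetric]) (simp_all add: step1)
  also have "\<dots> = (\<integral>\<^sup>+ x. \<integral>\<^sup>+ t. F x (e1 * t + e2 x) \<partial>lborel \<partial>lborel)"
    by (rule lborel_pair.Fubini') measurable
  also have "ennreal \<bar>e1\<bar> * \<dots> = (\<integral>\<^sup>+ x. ennreal \<bar>e1\<bar> * (\<integral>\<^sup>+ t. F x (e1 * t + e2 x) \<partial>lborel) \<partial>lborel)"
    by (rule nn_integral_cmult[symmetric]) measurable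
  also have "\<dots> = (\<integral>\<^sup>+ u. \<integral>\<^sup>+ v. F u v \<partial>lborel \<partial>lborel)"
    by (simp add: step2)
  finally show ?thesis .
qed

lemma sum_upd2:
  assumes "finite J" "i \<notin> J" "j \<notin> J" "i \<noteq> j"
  shows "(\<Sum>l\<in>insert i (insert j J). (x(j:=t, i:=s)) l * p l) = s * p i + t * p j + (\<Sum>l\<in>J. x l * p l)"
proof -
  have "(\<Sum>l\<in>J. (x(j:=t, i:=s)) l * p l) = (\<Sum>l\<in>J. x l * p l)"
    using assms by (intro sum.cong) auto
  then show ?thesis using assms by (simp add: sum.insert add.assoc)
qed

lemma prod_upd2:
  assumes "finite J" "i \<notin> J" "j \<notin> J" "i \<noteq> j"
  shows "(\<Prod>l\<in>insert i (insert j J). gw ((x(j:=t, i:=s)) l)) = gw s * gw t * (\<Prod>l\<in>J. gw (x l))"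
proof -
  have "(\<Prod>l\<in>J. gw ((x(j:=t, i:=s)) l)) = (\<Prod>l\<in>J. gw (x l))"
    using assms by (intro prod.cong) auto
  then show ?thesis using assms by (simp add: prod.insert)
qed

lemma gw2_le: "gw s * gw t \<le> 1 / pi"
proof -
  have "gw s * gw t \<le> (1 / sqrt pi) * (1 / sqrt pi)"
    by (intro mult_mono gw_le) auto
  then show ?thesis by simp
qed

lemma small_part:
  assumes I: "finite I" "i \<in> I" "j \<in> I" "i \<noteq> j" and pi0: "p i \<noteq> 0"
    and D: "p i * q j - p j * q i \<noteq> 0" and k: "0 < \<kappa>" and m: "1 \<le> m"
  shows "(\<integral>\<^sup>+ f. ennreal ((\<Prod>l\<in>I. gw (f l)) * Lf m (\<kappa> * ((\<Sum>l\<in>I. f l * p l)\<^sup>2 + (\<Sum>l\<in>I. f l * q l)\<^sup>2))) \<partial>PiM I (\<lambda>_. lborel))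
     \<le> ennreal (4 * fact m / (pi * \<kappa> * \<bar>p i * q j - p j * q i\<bar>))"
proof -
  define J where "J = I - {i, j}"
  define K where "K = insert j J"
  have IK: "I = insert i K" and KJ: "K = insert j J" using I by (auto simp: J_def K_def)
  have fin: "finite J" "finite K" "i \<notin> K" "j \<notin> J" "i \<notin> J" using I by (auto simp: J_def K_def)
  define dd where "dd = \<bar>p i * q j - p j * q i\<bar>"
  have dd: "0 < dd" using D by (simp add: dd_def)
  define C where "C = 4 * fact m / (pi * \<kappa> * dd)"
  define F where "F f = ennreal ((\<Prod>l\<in>I. gw (f l)) * Lf m (\<kappa> * ((\<Sum>l\<in>I. f l * p l)\<^sup>2 + (\<Sum>l\<in>I. f l * q l)\<^sup>2)))" for f
  have Fm[measurable]: "F \<in> borel_measurable (PiM I (\<lambda>_. lborel))" unfolding F_def by measurable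
  have "integral\<^sup>N (PiM I (\<lambda>_. lborel)) F = (\<integral>\<^sup>+ x. (\<integral>\<^sup>+ s. F (x(i := s)) \<partial>lborel) \<partial>PiM K (\<lambda>_. lborel))"
    unfolding IK by (rule lb.product_nn_integral_insert) (use fin Fm IK in auto)
  also have "\<dots> = (\<integral>\<^sup>+ x. (\<integral>\<^sup>+ t. (\<integral>\<^sup>+ s. F (x(j := t, i := s)) \<partial>lborel) \<partial>lborel) \<partial>PiM J (\<lambda>_. lborel))"
    unfolding KJ
  proof (rule lb.product_nn_integral_insert)
    show "(\<lambda>x. \<integral>\<^sup>+ s. F (x(i := s)) \<partial>lborel) \<in> borel_measurable (PiM (insert j J) (\<lambda>_. lborel))"
    proof (rule lborel.borel_measurable_nn_integral)
      have "(\<lambda>(f, y). f(i := y)) \<in> measurable (PiM K (\<lambda>_. lborel) \<Otimes>\<^sub>M lborel) (PiM (insert i K) (\<lambda>_. lborel))"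
        by (rule measurable_add_dim)
      then show "case_prod (\<lambda>x s. F (x(i := s))) \<in> borel_measurable (PiM (insert j J) (\<lambda>_. lborel) \<Otimes>\<^sub>M lborel)"
        using Fm unfolding IK KJ[symmetric] by (simp add: split_beta')
    qed
  qed (use fin in auto)
  also have "\<dots> \<le> (\<integral>\<^sup>+ x. ennreal (\<Prod>l\<in>J. gw (x l)) * ennreal C \<partial>PiM J (\<lambda>_. lborel))"
  proof (rule nn_integral_mono)
    fix x :: "'a \<Rightarrow> real"
    define W where "W = (\<Prod>l\<in>J. gw (x l))"
    have W: "0 \<le> W" unfolding W_def by (simp add: prod_nonneg)
    define c1 where "c1 = (\<Sum>l\<in>J. x l * p l)"
    define c2 where "c2 = (\<Sum>l\<in>J. x l * q l)"
    define H where "H u v = ennreal (Lf m (\<kappa> * (u\<^sup>2 + v\<^sup>2)))" for u v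
    have Hm[measurable]: "case_prod H \<in> borel_measurable (lborel \<Otimes>\<^sub>M lborel)" unfolding H_def by measurable
    have pw: "F (x(j := t, i := s)) \<le> ennreal (W / pi) * H (p i * s + p j * t + c1) (q i * s + q j * t + c2)" for s t
    proof -
      have I2: "I = insert i (insert j J)" using IK KJ by simp
      have "F (x(j := t, i := s)) = ennreal (gw s * gw t * W * Lf m (\<kappa> * ((p i * s + p j * t + c1)\<^sup>2 + (q i * s + q j * t + c2)\<^sup>2)))"
      proof -
        have sp: "(\<Sum>l\<in>insert i (insert j J). (x(j:=t, i:=s)) l * p l) = s * p i + t * p j + c1"
          unfolding c1_def using fin I by (intro sum_upd2) auto
        have sq: "(\<Sum>l\<in>insert i (insert j J). (x(j:=t, i:=s)) l * q l) = s * q i + t * q j + c2"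
          unfolding c2_def using fin I by (intro sum_upd2) auto
        have pr: "(\<Prod>l\<in>insert i (insert j J). gw ((x(j:=t, i:=s)) l)) = gw s * gw t * W"
          unfolding W_def using fin I by (intro prod_upd2) auto
        show ?thesis unfolding F_def I2 sp sq pr by (simp add: mult_ac)
      qed
      also have "\<dots> \<le> ennreal (1 / pi * W * Lf m (\<kappa> * ((p i * s + p j * t + c1)\<^sup>2 + (q i * s + q j * t + c2)\<^sup>2)))"
        by (intro ennreal_leI mult_right_mono gw2_le W Lf_nonneg)
      also have "\<dots> = ennreal (W / pi) * H (p i * s + p j * t + c1) (q i * s + q j * t + c2)"
        unfolding H_def by (simp add: ennreal_mult'[symmetric] W)
      finally show ?thesis .
    qed
    have "(\<integral>\<^sup>+ t. (\<integral>\<^sup>+ s. F (x(j := t, i := s)) \<partial>lborel) \<partial>lborel)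
        \<le> (\<integral>\<^sup>+ t. (\<integral>\<^sup>+ s. ennreal (W / pi) * H (p i * s + p j * t + c1) (q i * s + q j * t + c2) \<partial>lborel) \<partial>lborel)"
      by (intro nn_integral_mono pw)
    also have "\<dots> = ennreal (W / pi) * (\<integral>\<^sup>+ t. (\<integral>\<^sup>+ s. H (p i * s + p j * t + c1) (q i * s + q j * t + c2) \<partial>lborel) \<partial>lborel)"
      by (simp add: nn_integral_cmult)
    also have "(\<integral>\<^sup>+ t. (\<integral>\<^sup>+ s. H (p i * s + p j * t + c1) (q i * s + q j * t + c2) \<partial>lborel) \<partial>lborel) \<le> ennreal (4 * fact m / \<kappa> / dd)"
    proof -
      have e: "ennreal dd * (\<integral>\<^sup>+ t. (\<integral>\<^sup>+ s. H (p i * s + p j * t + c1) (q i * s + q j * t + c2) \<partial>lborel) \<partial>lborel)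
          = (\<integral>\<^sup>+ u. \<integral>\<^sup>+ v. H u v \<partial>lborel \<partial>lborel)"
        unfolding dd_def by (rule affine2[OF Hm pi0 D])
      have "(\<integral>\<^sup>+ u. \<integral>\<^sup>+ v. H u v \<partial>lborel \<partial>lborel) \<le> ennreal (4 * fact m / \<kappa>)"
        unfolding H_def by (rule twoD_logint[OF k m])
      then have "ennreal (1 / dd) * (ennreal dd * (\<integral>\<^sup>+ t. (\<integral>\<^sup>+ s. H (p i * s + p j * t + c1) (q i * s + q j * t + c2) \<partial>lborel) \<partial>lborel))
           \<le> ennreal (1 / dd) * ennreal (4 * fact m / \<kappa>)"
        unfolding e by (rule mult_left_mono) simp
      then show ?thesis using dd
        by (simp add: mult.assoc[symmetric] ennreal_mult'[symmetric] divide_simps mult.commute)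
    qed
    then have "ennreal (W / pi) * (\<integral>\<^sup>+ t. (\<integral>\<^sup>+ s. H (p i * s + p j * t + c1) (q i * s + q j * t + c2) \<partial>lborel) \<partial>lborel)
        \<le> ennreal (W / pi) * ennreal (4 * fact m / \<kappa> / dd)"
      by (rule mult_left_mono) simp
    also have "\<dots> = ennreal W * ennreal C"
      using W dd k by (simp add: C_def ennreal_mult'[symmetric] field_simps)
    finally show "(\<integral>\<^sup>+ t. (\<integral>\<^sup>+ s. F (x(j := t, i := s)) \<partial>lborel) \<partial>lborel) \<le> ennreal (\<Prod>l\<in>J. gw (x l)) * ennreal C"
      unfolding W_def .
  qed
  also have "\<dots> = (\<integral>\<^sup>+ x. ennreal (\<Prod>l\<in>J. gw (x l)) \<partial>PiM J (\<lambda>_. lborel)) * ennreal C"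
    by (rule nn_integral_multc) measurable
  also have "(\<integral>\<^sup>+ x. ennreal (\<Prod>l\<in>J. gw (x l)) \<partial>PiM J (\<lambda>_. lborel)) = (\<integral>\<^sup>+ x. (\<Prod>l\<in>J. ennreal (gw (x l))) \<partial>PiM J (\<lambda>_. lborel))"
    by (intro nn_integral_cong) (simp add: prod_ennreal)
  also have "\<dots> = (\<Prod>l\<in>J. (\<integral>\<^sup>+ s. ennreal (gw s) \<partial>lborel))"
    by (rule lb.product_nn_integral_prod) (use fin in auto)
  also have "\<dots> = 1" by (simp add: gw_nn0)
  finally show ?thesis by (simp add: F_def C_def dd_def)
qed

lemma pow_le_fact_exp: fixes x :: real assumes "0 \<le> x" shows "x ^ m \<le> fact m * exp x"
proof -
  have "(\<lambda>n. x ^ n /\<^sub>R fact n) sums exp x" by (rule exp_converges)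
  then have "sum (\<lambda>n. x ^ n /\<^sub>R fact n) {m} \<le> exp x"
    using sum_le_suminf[of "\<lambda>n. x ^ n /\<^sub>R fact n" "{m}"] assms by (auto simp: sums_iff)
  then have "x ^ m / fact m \<le> exp x" by (simp add: divide_inverse mult.commute)
  then show ?thesis by (simp add: divide_le_eq mult.commute)
qed

lemma log_pw: assumes "0 \<le> y" "1 \<le> m" shows "\<bar>ln y\<bar> ^ m \<le> fact m * y + Lf m y"
proof (cases "y < 1")
  case True
  show ?thesis
  proof (cases "y = 0")
    case True then show ?thesis using assms by (simp add: Lf_def power_0_left)
  next
    case False
    with True assms have "0 < y" by simp
    then have "\<bar>ln y\<bar> = - ln y" using True by simp
    then show ?thesis using \<open>0 < y\<close> True assms by (simp add: Lf_def)
  qed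
next
  case False
  then have "0 \<le> ln y" "\<bar>ln y\<bar> = ln y" by auto
  then have "\<bar>ln y\<bar> ^ m \<le> fact m * exp (ln y)" using pow_le_fact_exp by simp
  also have "exp (ln y) = y" using False by simp
  finally show ?thesis using False by (simp add: Lf_def)
qed



lemma abstract_bound:
  assumes I: "finite I" "i \<in> I" "j \<in> I" "i \<noteq> j" and pi0: "p i \<noteq> 0"
    and D: "p i * q j - p j * q i \<noteq> 0" and k: "0 < \<kappa>" and m: "1 \<le> m"
  shows "(\<integral>\<^sup>+ f. ennreal ((\<Prod>l\<in>I. gw (f l)) * \<bar>ln (\<kappa> * ((\<Sum>l\<in>I. f l * p l)\<^sup>2 + (\<Sum>l\<in>I. f l * q l)\<^sup>2))\<bar> ^ m) \<partial>PiM I (\<lambda>_. lborel))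
     \<le> ennreal (fact m * \<kappa> * ((\<Sum>l\<in>I. (p l)\<^sup>2) + (\<Sum>l\<in>I. (q l)\<^sup>2)) / 2 + 4 * fact m / (pi * \<kappa> * \<bar>p i * q j - p j * q i\<bar>))"
proof -
  define P where "P f = (\<Sum>l\<in>I. f l * p l)" for f
  define Q where "Q f = (\<Sum>l\<in>I. f l * q l)" for f
  define W where "W f = (\<Prod>l\<in>I. gw (f l))" for f
  have W: "0 \<le> W f" for f unfolding W_def by (simp add: prod_nonneg)
  have [measurable]: "P \<in> borel_measurable (PiM I (\<lambda>_. lborel))" unfolding P_def by measurable
  have [measurable]: "Q \<in> borel_measurable (PiM I (\<lambda>_. lborel))" unfolding Q_def by measurable
  have [measurable]: "W \<in> borel_measurable (PiM I (\<lambda>_. lborel))" unfolding W_def by measurable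
  have "(\<integral>\<^sup>+ f. ennreal (W f * \<bar>ln (\<kappa> * ((P f)\<^sup>2 + (Q f)\<^sup>2))\<bar> ^ m) \<partial>PiM I (\<lambda>_. lborel))
     \<le> (\<integral>\<^sup>+ f. ennreal (fact m * \<kappa>) * ennreal (W f * (0 + P f)\<^sup>2) + ennreal (fact m * \<kappa>) * ennreal (W f * (0 + Q f)\<^sup>2)
          + ennreal (W f * Lf m (\<kappa> * ((P f)\<^sup>2 + (Q f)\<^sup>2))) \<partial>PiM I (\<lambda>_. lborel))"
  proof (rule nn_integral_mono)
    fix f
    have "W f * \<bar>ln (\<kappa> * ((P f)\<^sup>2 + (Q f)\<^sup>2))\<bar> ^ m \<le> W f * (fact m * (\<kappa> * ((P f)\<^sup>2 + (Q f)\<^sup>2)) + Lf m (\<kappa> * ((P f)\<^sup>2 + (Q f)\<^sup>2)))"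
      using k m by (intro mult_left_mono log_pw W) auto
    also have "\<dots> = (fact m * \<kappa>) * (W f * (0 + P f)\<^sup>2) + (fact m * \<kappa>) * (W f * (0 + Q f)\<^sup>2) + W f * Lf m (\<kappa> * ((P f)\<^sup>2 + (Q f)\<^sup>2))"
      by (simp add: algebra_simps)
    finally show "ennreal (W f * \<bar>ln (\<kappa> * ((P f)\<^sup>2 + (Q f)\<^sup>2))\<bar> ^ m) \<le> ennreal (fact m * \<kappa>) * ennreal (W f * (0 + P f)\<^sup>2) + ennreal (fact m * \<kappa>) * ennreal (W f * (0 + Q f)\<^sup>2)
          + ennreal (W f * Lf m (\<kappa> * ((P f)\<^sup>2 + (Q f)\<^sup>2)))"
      using k W by (simp add: ennreal_mult'[symmetric] flip: ennreal_plus)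
  qed
  also have "\<dots> = ennreal (fact m * \<kappa>) * (\<integral>\<^sup>+ f. ennreal (W f * (0 + P f)\<^sup>2) \<partial>PiM I (\<lambda>_. lborel))
      + ennreal (fact m * \<kappa>) * (\<integral>\<^sup>+ f. ennreal (W f * (0 + Q f)\<^sup>2) \<partial>PiM I (\<lambda>_. lborel))
      + (\<integral>\<^sup>+ f. ennreal (W f * Lf m (\<kappa> * ((P f)\<^sup>2 + (Q f)\<^sup>2))) \<partial>PiM I (\<lambda>_. lborel))"
    by (simp add: nn_integral_add nn_integral_cmult)
  also have "(\<integral>\<^sup>+ f. ennreal (W f * (0 + P f)\<^sup>2) \<partial>PiM I (\<lambda>_. lborel)) = ennreal (0\<^sup>2 + (\<Sum>l\<in>I. (p l)\<^sup>2) / 2)"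
    unfolding W_def P_def by (rule large_sq[OF I(1)])
  also have "(\<integral>\<^sup>+ f. ennreal (W f * (0 + Q f)\<^sup>2) \<partial>PiM I (\<lambda>_. lborel)) = ennreal (0\<^sup>2 + (\<Sum>l\<in>I. (q l)\<^sup>2) / 2)"
    unfolding W_def Q_def by (rule large_sq[OF I(1)])
  also have "ennreal (fact m * \<kappa>) * ennreal (0\<^sup>2 + (\<Sum>l\<in>I. (p l)\<^sup>2) / 2) + ennreal (fact m * \<kappa>) * ennreal (0\<^sup>2 + (\<Sum>l\<in>I. (q l)\<^sup>2) / 2)
      + (\<integral>\<^sup>+ f. ennreal (W f * Lf m (\<kappa> * ((P f)\<^sup>2 + (Q f)\<^sup>2))) \<partial>PiM I (\<lambda>_. lborel))
      \<le> ennreal (fact m * \<kappa>) * ennreal (0\<^sup>2 + (\<Sum>l\<in>I. (p l)\<^sup>2) / 2) + ennreal (fact m * \<kappa>) * ennreal (0\<^sup>2 + (\<Sum>l\<in>I. (q l)\<^sup>2) / 2)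
      + ennreal (4 * fact m / (pi * \<kappa> * \<bar>p i * q j - p j * q i\<bar>))"
    by (rule add_left_mono) (unfold W_def P_def Q_def, rule small_part[OF I pi0 D k m])
  also have "ennreal (fact m * \<kappa>) * ennreal (0\<^sup>2 + (\<Sum>l\<in>I. (p l)\<^sup>2) / 2) + ennreal (fact m * \<kappa>) * ennreal (0\<^sup>2 + (\<Sum>l\<in>I. (q l)\<^sup>2) / 2)
      + ennreal (4 * fact m / (pi * \<kappa> * \<bar>p i * q j - p j * q i\<bar>))
    = ennreal (fact m * \<kappa> * ((\<Sum>l\<in>I. (p l)\<^sup>2) + (\<Sum>l\<in>I. (q l)\<^sup>2)) / 2 + 4 * fact m / (pi * \<kappa> * \<bar>p i * q j - p j * q i\<bar>))"
  proof -
    have n1: "0 \<le> fact m * \<kappa>" using k by simp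
    have n2: "0 \<le> 0\<^sup>2 + (\<Sum>l\<in>I. (p l)\<^sup>2) / 2" "0 \<le> 0\<^sup>2 + (\<Sum>l\<in>I. (q l)\<^sup>2) / 2" by (simp_all add: sum_nonneg)
    have n3: "0 \<le> 4 * fact m / (pi * \<kappa> * \<bar>p i * q j - p j * q i\<bar>)" using k by simp
    have "ennreal (fact m * \<kappa>) * ennreal (0\<^sup>2 + (\<Sum>l\<in>I. (p l)\<^sup>2) / 2) + ennreal (fact m * \<kappa>) * ennreal (0\<^sup>2 + (\<Sum>l\<in>I. (q l)\<^sup>2) / 2)
      + ennreal (4 * fact m / (pi * \<kappa> * \<bar>p i * q j - p j * q i\<bar>))
      = ennreal ((fact m * \<kappa>) * (0\<^sup>2 + (\<Sum>l\<in>I. (p l)\<^sup>2) / 2) + (fact m * \<kappa>) * (0\<^sup>2 + (\<Sum>l\<in>I. (q l)\<^sup>2) / 2)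
         + 4 * fact m / (pi * \<kappa> * \<bar>p i * q j - p j * q i\<bar>))"
      using n1 n2 n3 by (simp only: ennreal_mult ennreal_plus mult_nonneg_nonneg add_nonneg_nonneg)
    also have "(fact m * \<kappa>) * (0\<^sup>2 + (\<Sum>l\<in>I. (p l)\<^sup>2) / 2) + (fact m * \<kappa>) * (0\<^sup>2 + (\<Sum>l\<in>I. (q l)\<^sup>2) / 2)
         = fact m * \<kappa> * ((\<Sum>l\<in>I. (p l)\<^sup>2) + (\<Sum>l\<in>I. (q l)\<^sup>2)) / 2"
      by (simp add: field_simps)
    finally show ?thesis .
  qed
  finally show ?thesis by (simp only: W_def P_def Q_def)
qed



lemma lagrange_id:
  fixes p q :: "'b \<Rightarrow> real"
  assumes "finite B"
  shows "(\<Sum>b\<in>B. \<Sum>b'\<in>B. (p b * q b' - p b' * q b)\<^sup>2)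
     = 2 * ((\<Sum>b\<in>B. (p b)\<^sup>2) * (\<Sum>b\<in>B. (q b)\<^sup>2) - (\<Sum>b\<in>B. p b * q b)\<^sup>2)"
proof -
  have e: "(p b * q b' - p b' * q b)\<^sup>2 = (p b)\<^sup>2 * (q b')\<^sup>2 + (q b)\<^sup>2 * (p b')\<^sup>2 - 2 * ((p b * q b) * (p b' * q b'))" for b b'
    by (simp add: power2_eq_square algebra_simps)
  have "(\<Sum>b\<in>B. \<Sum>b'\<in>B. (p b * q b' - p b' * q b)\<^sup>2)
      = (\<Sum>b\<in>B. \<Sum>b'\<in>B. (p b)\<^sup>2 * (q b')\<^sup>2) + (\<Sum>b\<in>B. \<Sum>b'\<in>B. (q b)\<^sup>2 * (p b')\<^sup>2) - 2 * (\<Sum>b\<in>B. \<Sum>b'\<in>B. (p b * q b) * (p b' * q b'))"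
    unfolding e by (simp add: sum.distrib sum_subtractf sum_distrib_left)
  also have "\<dots> = (\<Sum>b\<in>B. (p b)\<^sup>2) * (\<Sum>b\<in>B. (q b)\<^sup>2) + (\<Sum>b\<in>B. (q b)\<^sup>2) * (\<Sum>b\<in>B. (p b)\<^sup>2) - 2 * ((\<Sum>b\<in>B. p b * q b) * (\<Sum>b\<in>B. p b * q b))"
    by (simp only: sum_product)
  finally show ?thesis by (simp add: power2_eq_square algebra_simps)
qed

lemma final_arith:
  fixes n S T G Dm F :: real
  assumes S: "0 < S" and T: "0 \<le> T" and ST: "S\<^sup>2 - T\<^sup>2 = 4 * G" and G: "0 < G"
    and GD: "2 * G \<le> n\<^sup>2 * Dm\<^sup>2" and DG: "Dm\<^sup>2 \<le> 2 * G" and Dm: "0 < Dm" and n: "1 \<le> n" and F: "0 < F"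
  shows "F * (n / S) * S / 2 + 4 * F / (pi * (n / S) * Dm) \<le> 4 * F * n / (1 - T / S)"
proof -
  have "T\<^sup>2 < S\<^sup>2" using ST G by simp
  then have TS: "T < S" by (rule power2_less_imp_less) (use S in linarith)
  define u where "u = S - T"
  have u: "0 < u" using TS by (simp add: u_def)
  have "u * (S + T) = 4 * G" using ST by (simp add: u_def power2_eq_square algebra_simps)
  moreover have "u * S \<le> u * (S + T)" using u T by (intro mult_left_mono) auto
  ultimately have "u * S \<le> 4 * G" by linarith
  also have "\<dots> \<le> 2 * n\<^sup>2 * Dm\<^sup>2" using GD by linarith
  finally have uS: "u * S \<le> 2 * n\<^sup>2 * Dm\<^sup>2" .
  have "Dm\<^sup>2 \<le> S\<^sup>2" using DG ST zero_le_power2[of T] G by linarith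
  then have DS: "Dm \<le> S" by (rule power2_le_imp_le) (use S in linarith)
  have "Dm * Dm \<le> Dm * S" using DS Dm by (intro mult_left_mono) auto
  then have "Dm\<^sup>2 \<le> Dm * S" by (simp add: power2_eq_square)
  then have "2 * n\<^sup>2 * Dm\<^sup>2 \<le> 2 * n\<^sup>2 * (Dm * S)" by (intro mult_left_mono) auto
  then have "u * S \<le> 2 * n\<^sup>2 * Dm * S" using uS by (simp add: mult.assoc)
  then have uD: "u \<le> 2 * n\<^sup>2 * Dm" using S by simp
  have e1: "1 - T / S = u / S" using S by (simp add: u_def field_simps)
  have rhs: "4 * F * n / (1 - T / S) = 4 * F * n * S / u" unfolding e1 using S u by simp
  have t1: "F * (n / S) * S / 2 = F * n / 2" using S by simp
  have "F * n / 2 \<le> F * n * S / (2 * u)"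
  proof -
    have "u \<le> S" using T by (simp add: u_def)
    then have "1 \<le> S / u" using u by simp
    then have "F * n / 2 * 1 \<le> F * n / 2 * (S / u)" using F n by (intro mult_left_mono) auto
    then show ?thesis by simp
  qed
  moreover have "4 * F / (pi * (n / S) * Dm) \<le> 3 * F * n * S / u"
  proof -
    have pi3: "3 < pi" by (rule pi_gt3)
    have "4 * F / (pi * (n / S) * Dm) = 4 * F * S / (pi * (n * Dm))" using S by (simp add: field_simps)
    also have "\<dots> \<le> 4 * F * S * (2 * n) / (pi * u)"
    proof -
      have "u * 1 \<le> 2 * n\<^sup>2 * Dm" using uD by simp
      then have "1 / (n * Dm) \<le> 2 * n / u" using u n Dm by (simp add: field_simps power2_eq_square)
      then have "4 * F * S / pi * (1 / (n * Dm)) \<le> 4 * F * S / pi * (2 * n / u)"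
        using F S by (intro mult_left_mono) auto
      then show ?thesis by (simp add: field_simps)
    qed
    also have "\<dots> = (8 / pi) * (F * n * S / u)" by (simp add: field_simps)
    also have "\<dots> \<le> 3 * (F * n * S / u)"
    proof (rule mult_right_mono)
      show "8 / pi \<le> 3" using pi3 by (simp add: field_simps)
      show "0 \<le> F * n * S / u" using F n S u by simp
    qed
    finally show ?thesis by simp
  qed
  ultimately have "F * n / 2 + 4 * F / (pi * (n / S) * Dm) \<le> F * n * S / (2 * u) + 3 * F * n * S / u" by (rule add_mono)
  also have "\<dots> \<le> 4 * F * n * S / u" using u F n S by (simp add: field_simps)
  finally show ?thesis unfolding t1 rhs .
qed



lemma pair_select:
  fixes p q :: "'b \<Rightarrow> real"
  assumes B: "finite B" and G: "0 < (\<Sum>b\<in>B. (p b)\<^sup>2) * (\<Sum>b\<in>B. (q b)\<^sup>2) - (\<Sum>b\<in>B. p b * q b)\<^sup>2"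
  obtains i j where "i \<in> B" "j \<in> B" "i \<noteq> j" "p i \<noteq> 0" "p i * q j - p j * q i \<noteq> 0"
    "2 * ((\<Sum>b\<in>B. (p b)\<^sup>2) * (\<Sum>b\<in>B. (q b)\<^sup>2) - (\<Sum>b\<in>B. p b * q b)\<^sup>2) \<le> (real (card B))\<^sup>2 * (p i * q j - p j * q i)\<^sup>2"
    "(p i * q j - p j * q i)\<^sup>2 \<le> 2 * ((\<Sum>b\<in>B. (p b)\<^sup>2) * (\<Sum>b\<in>B. (q b)\<^sup>2) - (\<Sum>b\<in>B. p b * q b)\<^sup>2)"
proof -
  define GG where "GG = (\<Sum>b\<in>B. (p b)\<^sup>2) * (\<Sum>b\<in>B. (q b)\<^sup>2) - (\<Sum>b\<in>B. p b * q b)\<^sup>2"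
  define D where "D b b' = p b * q b' - p b' * q b" for b b'
  have lag: "(\<Sum>b\<in>B. \<Sum>b'\<in>B. (D b b')\<^sup>2) = 2 * GG"
    unfolding D_def GG_def by (rule lagrange_id[OF B])
  have Bne: "B \<noteq> {}" using G by auto
  have fin: "finite ((\<lambda>(b, b'). \<bar>D b b'\<bar>) ` (B \<times> B))" using B by simp
  have ne: "(\<lambda>(b, b'). \<bar>D b b'\<bar>) ` (B \<times> B) \<noteq> {}" using Bne by simp
  define Dm where "Dm = Max ((\<lambda>(b, b'). \<bar>D b b'\<bar>) ` (B \<times> B))"
  have "Dm \<in> (\<lambda>(b, b'). \<bar>D b b'\<bar>) ` (B \<times> B)" unfolding Dm_def by (rule Max_in[OF fin ne])
  then obtain i0 j0 where ij0: "i0 \<in> B" "j0 \<in> B" "Dm = \<bar>D i0 j0\<bar>" by auto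
  have le: "\<bar>D b b'\<bar> \<le> Dm" if "b \<in> B" "b' \<in> B" for b b'
    unfolding Dm_def using that fin by (intro Max_ge) auto
  have le2: "(D b b')\<^sup>2 \<le> Dm\<^sup>2" if "b \<in> B" "b' \<in> B" for b b'
  proof -
    have "\<bar>D b b'\<bar>\<^sup>2 \<le> Dm\<^sup>2" using le[OF that] by (intro power_mono) auto
    then show ?thesis by simp
  qed
  have up: "2 * GG \<le> (real (card B))\<^sup>2 * Dm\<^sup>2"
  proof -
    have "(\<Sum>b\<in>B. \<Sum>b'\<in>B. (D b b')\<^sup>2) \<le> (\<Sum>b\<in>B. \<Sum>b'\<in>B. Dm\<^sup>2)"
      by (intro sum_mono le2) auto
    also have "\<dots> = (real (card B))\<^sup>2 * Dm\<^sup>2" by (simp add: power2_eq_square)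
    finally show ?thesis using lag by simp
  qed
  have low: "(D i0 j0)\<^sup>2 \<le> 2 * GG"
  proof -
    have "(D i0 j0)\<^sup>2 \<le> (\<Sum>b'\<in>B. (D i0 b')\<^sup>2)"
      using B ij0 by (intro member_le_sum) auto
    also have "\<dots> \<le> (\<Sum>b\<in>B. \<Sum>b'\<in>B. (D b b')\<^sup>2)"
      using B ij0 by (intro member_le_sum sum_nonneg) auto
    finally show ?thesis using lag by simp
  qed
  have Dm0: "D i0 j0 \<noteq> 0"
  proof
    assume "D i0 j0 = 0"
    then have "Dm = 0" using ij0 by simp
    then have "2 * GG \<le> 0" using up by simp
    then show False using G unfolding GG_def by simp
  qed
  have "i0 \<noteq> j0" using Dm0 by (auto simp: D_def)
  show ?thesis
  proof (cases "p i0 = 0")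
    case False
    show ?thesis
      by (rule that[of i0 j0]) (use ij0 \<open>i0 \<noteq> j0\<close> False Dm0 up low in \<open>auto simp: D_def GG_def\<close>)
  next
    case True
    then have "p j0 \<noteq> 0" using Dm0 by (auto simp: D_def)
    have e: "(p j0 * q i0 - p i0 * q j0)\<^sup>2 = (D i0 j0)\<^sup>2" by (simp add: D_def power2_eq_square algebra_simps)
    have e2: "p j0 * q i0 - p i0 * q j0 \<noteq> 0" using Dm0 by (simp add: D_def)
    have "Dm\<^sup>2 = (D i0 j0)\<^sup>2" using ij0 by simp
    show ?thesis
      by (rule that[of j0 i0]) (use ij0 \<open>i0 \<noteq> j0\<close> \<open>p j0 \<noteq> 0\<close> e e2 up low \<open>Dm\<^sup>2 = (D i0 j0)\<^sup>2\<close> in \<open>auto simp: GG_def\<close>)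
  qed
qed

definition xr :: "complex^'n \<Rightarrow> real^'n" where "xr z = (\<chi> i. Re (z$i))"
definition yr :: "complex^'n \<Rightarrow> real^'n" where "yr z = (\<chi> i. Im (z$i))"

lemma norm_z_sq: "(norm z)\<^sup>2 = xr z \<bullet> xr z + yr z \<bullet> yr z"
  by (simp add: power2_norm_eq_inner inner_vec_def inner_complex_def sum.distrib xr_def yr_def)

lemma lin_form_cmod_sq:
  fixes a :: "real^'n"
  shows "(cmod (lin_form a z))\<^sup>2 = real CARD('n) * ((a \<bullet> xr z)\<^sup>2 + (a \<bullet> yr z)\<^sup>2)"
proof -
  have re: "Re (lin_form a z) = sqrt (real CARD('n)) * (a \<bullet> xr z)"
    by (simp add: lin_form_def inner_vec_def xr_def sum_distrib_left mult_ac)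
  have im: "Im (lin_form a z) = sqrt (real CARD('n)) * (a \<bullet> yr z)"
    by (simp add: lin_form_def inner_vec_def yr_def sum_distrib_left mult_ac)
  show ?thesis unfolding cmod_power2 re im by (simp add: power_mult_distrib algebra_simps)
qed

lemma card_Basis_vec: "card (Basis :: (real^'n) set) = CARD('n)"
  using DIM_cart[where 'a=real and 'b='n] by simp

lemma pi_powr: "pi powr (- (real k / 2)) = 1 / sqrt pi ^ k"
proof -
  have "sqrt pi ^ k = (pi powr (1/2)) ^ k" by (simp add: powr_half_sqrt)
  also have "\<dots> = pi powr (real k / 2)" by (simp add: powr_realpow[symmetric] powr_powr)
  finally have e: "sqrt pi ^ k = pi powr (real k / 2)" .
  show ?thesis unfolding e by (rule powr_minus_divide)
qed

lemma gauss_prod: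
  fixes a :: "real^'n"
  shows "gauss_density a = (\<Prod>b\<in>Basis. gw (a \<bullet> b))"
proof -
  have "(norm a)\<^sup>2 = (\<Sum>b\<in>Basis. (a \<bullet> b) * (a \<bullet> b))"
    unfolding power2_norm_eq_inner by (rule euclidean_inner)
  then have "(norm a)\<^sup>2 = (\<Sum>b\<in>Basis. (a \<bullet> b)\<^sup>2)" by (simp add: power2_eq_square)
  then have "exp (- (norm a)\<^sup>2) = (\<Prod>b\<in>Basis. exp (- (a \<bullet> b)\<^sup>2))"
    by (simp add: exp_sum[symmetric] sum_negf)
  moreover have "(\<Prod>b\<in>Basis. gw (a \<bullet> b)) = (\<Prod>b\<in>Basis. exp (- (a \<bullet> b)\<^sup>2)) / sqrt pi ^ CARD('n)"
    by (simp add: gw_def prod_dividef card_Basis_vec)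
  ultimately show ?thesis by (simp add: gauss_density_def pi_powr)
qed



lemma sum_basis_sq: "(\<Sum>b\<in>Basis. (b \<bullet> x) * (b \<bullet> y)) = x \<bullet> (y :: 'a :: euclidean_space)"
  by (simp add: euclidean_inner[of x y] inner_commute)

lemma G_pos:
  fixes z :: "complex^'n"
  assumes nr: "\<not> real_point z"
  shows "0 < (\<Sum>b\<in>Basis. (b \<bullet> xr z)\<^sup>2) * (\<Sum>b\<in>Basis. (b \<bullet> yr z)\<^sup>2) - (\<Sum>b\<in>Basis. (b \<bullet> xr z) * (b \<bullet> yr z))\<^sup>2"
proof -
  define p where "p b = b \<bullet> xr z" for b :: "real^'n"
  define q where "q b = b \<bullet> yr z" for b :: "real^'n"
  define GG where "GG = (\<Sum>b\<in>Basis. (p b)\<^sup>2) * (\<Sum>b\<in>Basis. (q b)\<^sup>2) - (\<Sum>b\<in>Basis. p b * q b)\<^sup>2"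
  have lag: "(\<Sum>b\<in>Basis. \<Sum>b'\<in>Basis. (p b * q b' - p b' * q b)\<^sup>2) = 2 * GG"
    unfolding GG_def by (rule lagrange_id) simp
  have "0 \<le> (\<Sum>b\<in>Basis. \<Sum>b'\<in>(Basis :: (real^'n) set). (p b * q b' - p b' * q b)\<^sup>2)"
    by (intro sum_nonneg) auto
  then have G0: "0 \<le> GG" using lag by simp
  have "GG \<noteq> 0"
  proof
    assume "GG = 0"
    then have "(\<Sum>b\<in>Basis. \<Sum>b'\<in>(Basis :: (real^'n) set). (p b * q b' - p b' * q b)\<^sup>2) = 0" using lag by simp
    then have "\<forall>b\<in>Basis. (\<Sum>b'\<in>(Basis :: (real^'n) set). (p b * q b' - p b' * q b)\<^sup>2) = 0"
      by (subst (asm) sum_nonneg_eq_0_iff) (auto intro: sum_nonneg)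
    then have D0: "p b * q b' - p b' * q b = 0" if "b \<in> Basis" "b' \<in> Basis" for b b'
      using that by (auto simp: sum_nonneg_eq_0_iff)
    show False
    proof (cases "\<forall>b\<in>Basis. p b = 0")
      case True
      then have x0: "xr z = 0" using euclidean_all_zero_iff[of "xr z"] by (auto simp: p_def inner_commute)
      have "z = \<i> *s (\<chi> i. complex_of_real (yr z $ i))"
      proof (subst vec_eq_iff, intro allI)
        fix i
        have "Re (z $ i) = 0" using x0 by (metis xr_def vec_lambda_beta zero_index)
        then show "z $ i = (\<i> *s (\<chi> i. complex_of_real (yr z $ i))) $ i"
          by (simp add: vector_smult_component yr_def complex_eq_iff)
      qed
      then show False using nr unfolding real_point_def by blast
    next
      case False
      then obtain b0 where b0: "b0 \<in> Basis" "p b0 \<noteq> 0" by auto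
      define lam where "lam = q b0 / p b0"
      have "yr z = lam *\<^sub>R xr z"
      proof (rule euclidean_eqI)
        fix b :: "real^'n" assume b: "b \<in> Basis"
        have "p b0 * q b - p b * q b0 = 0" using D0[OF b0(1) b] .
        then have "q b = lam * p b" using b0 by (simp add: lam_def field_simps)
        then show "yr z \<bullet> b = lam *\<^sub>R xr z \<bullet> b" by (simp add: p_def q_def inner_commute)
      qed
      then have "yr z $ i = (lam *\<^sub>R xr z) $ i" for i by simp
      then have im: "Im (z $ i) = lam * Re (z $ i)" for i
        by (simp add: xr_def yr_def)
      have "z = Complex 1 lam *s (\<chi> i. complex_of_real (xr z $ i))"
      proof (subst vec_eq_iff, intro allI)
        fix i
        show "z $ i = (Complex 1 lam *s (\<chi> i. complex_of_real (xr z $ i))) $ i"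
          using im[of i] by (simp add: vector_smult_component xr_def complex_eq_iff)
      qed
      then show False using nr unfolding real_point_def by blast
    qed
  qed
  with G0 have "0 < GG" by simp
  then show ?thesis by (simp add: GG_def p_def q_def)
qed

lemma tau_sq:
  fixes z :: "complex^'n"
  shows "(cmod (\<Sum>i\<in>UNIV. (z$i)^2))\<^sup>2 = (xr z \<bullet> xr z - yr z \<bullet> yr z)\<^sup>2 + 4 * (xr z \<bullet> yr z)\<^sup>2"
proof -
  have re: "Re (\<Sum>i\<in>UNIV. (z$i)^2) = xr z \<bullet> xr z - yr z \<bullet> yr z"
    by (simp add: Re_sum inner_vec_def xr_def yr_def power2_eq_square sum_subtractf)
  have im: "Im (\<Sum>i\<in>UNIV. (z$i)^2) = 2 * (xr z \<bullet> yr z)"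
    by (simp add: Im_sum inner_vec_def xr_def yr_def power2_eq_square sum_distrib_left mult_ac)
  show ?thesis unfolding cmod_power2 re im by (simp add: power_mult_distrib)
qed



lemma inner_sum_basis_comp:
  assumes "b0 \<in> (Basis :: ('a::euclidean_space) set)"
  shows "(\<Sum>b\<in>Basis. f b *\<^sub>R b) \<bullet> b0 = f b0"
  using assms by (simp add: inner_sum_left inner_Basis if_distrib[of "\<lambda>x. _ * x"] sum.delta' cong: if_cong)

lemma inner_sum_basis_gen:
  "(\<Sum>b\<in>Basis. f b *\<^sub>R b) \<bullet> (x :: 'a::euclidean_space) = (\<Sum>b\<in>Basis. f b * (b \<bullet> x))"
  by (simp add: inner_sum_left)

lemma M_CP_eq:
  fixes z :: "complex^'n"
  assumes z: "z \<noteq> 0"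
  shows "M_CP m z = (\<integral>\<^sup>+ f. ennreal ((\<Prod>b\<in>Basis. gw (f b)) *
     \<bar>ln ((real CARD('n) / (norm z)\<^sup>2) * ((\<Sum>b\<in>Basis. f b * (b \<bullet> xr z))\<^sup>2 + (\<Sum>b\<in>Basis. f b * (b \<bullet> yr z))\<^sup>2))\<bar> ^ m) \<partial>PiM Basis (\<lambda>_. lborel))"
proof -
  define \<kappa> where "\<kappa> = real CARD('n) / (norm z)\<^sup>2"
  define G where "G a = ennreal ((\<Prod>b\<in>Basis. gw (a \<bullet> b)) * \<bar>ln (\<kappa> * ((a \<bullet> xr z)\<^sup>2 + (a \<bullet> yr z)\<^sup>2))\<bar> ^ m)" for a :: "real^'n"
  have Gm[measurable]: "G \<in> borel_measurable borel" unfolding G_def by measurable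
  have "M_CP m z = (\<integral>\<^sup>+ a. G a \<partial>lborel)"
    unfolding M_CP_def
  proof (intro nn_integral_cong)
    fix a :: "real^'n"
    have "(sec_norm a z)\<^sup>2 = \<kappa> * ((a \<bullet> xr z)\<^sup>2 + (a \<bullet> yr z)\<^sup>2)"
      by (simp add: sec_norm_def power_divide lin_form_cmod_sq \<kappa>_def)
    then show "ennreal (gauss_density a * \<bar>ln ((sec_norm a z)\<^sup>2)\<bar> ^ m) = G a"
      by (simp add: G_def gauss_prod)
  qed
  also have "\<dots> = (\<integral>\<^sup>+ f. G (\<Sum>b\<in>Basis. f b *\<^sub>R b) \<partial>PiM Basis (\<lambda>_. lborel))"
    by (subst lborel_eq) (rule nn_integral_distr; measurable)
  also have "\<dots> = (\<integral>\<^sup>+ f. ennreal ((\<Prod>b\<in>Basis. gw (f b)) *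
     \<bar>ln (\<kappa> * ((\<Sum>b\<in>Basis. f b * (b \<bullet> xr z))\<^sup>2 + (\<Sum>b\<in>Basis. f b * (b \<bullet> yr z))\<^sup>2))\<bar> ^ m) \<partial>PiM Basis (\<lambda>_. lborel))"
  proof (intro nn_integral_cong)
    fix f :: "real^'n \<Rightarrow> real"
    have "(\<Prod>b\<in>Basis. gw ((\<Sum>b\<in>Basis. f b *\<^sub>R b) \<bullet> b)) = (\<Prod>b\<in>Basis. gw (f b))"
      by (intro prod.cong refl) (simp add: inner_sum_basis_comp)
    then show "G (\<Sum>b\<in>Basis. f b *\<^sub>R b) = ennreal ((\<Prod>b\<in>Basis. gw (f b)) *
     \<bar>ln (\<kappa> * ((\<Sum>b\<in>Basis. f b * (b \<bullet> xr z))\<^sup>2 + (\<Sum>b\<in>Basis. f b * (b \<bullet> yr z))\<^sup>2))\<bar> ^ m)"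
      by (simp add: G_def inner_sum_basis_gen)
  qed
  finally show ?thesis by (simp add: \<kappa>_def)
qed



theorem proposition1p1:
  fixes z :: "complex^'n" and m :: nat
  assumes "CARD('n) \<ge> 2"
    and "m \<ge> 1"
    and "z \<noteq> 0"
    and "\<not> real_point z"
  shows "M_CP m z \<le> ennreal (4 * fact m * real CARD('n) / (1 - tau_norm z))"
proof -
  define p where "p b = b \<bullet> xr z" for b :: "real^'n"
  define q where "q b = b \<bullet> yr z" for b :: "real^'n"
  define X where "X = xr z \<bullet> xr z"
  define Y where "Y = yr z \<bullet> yr z"
  define Z where "Z = xr z \<bullet> yr z"
  have sX: "(\<Sum>b\<in>Basis. (p b)\<^sup>2) = X" unfolding p_def X_def using sum_basis_sq[of "xr z" "xr z"] by (simp add: power2_eq_square)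
  have sY: "(\<Sum>b\<in>Basis. (q b)\<^sup>2) = Y" unfolding q_def Y_def using sum_basis_sq[of "yr z" "yr z"] by (simp add: power2_eq_square)
  have sZ: "(\<Sum>b\<in>Basis. p b * q b) = Z" unfolding p_def q_def Z_def using sum_basis_sq[of "xr z" "yr z"] by simp
  define GG where "GG = X * Y - Z\<^sup>2"
  have GG: "0 < GG" using G_pos[OF assms(4)] sX sY sZ unfolding GG_def p_def q_def by simp
  have Gp: "0 < (\<Sum>b\<in>Basis. (p b)\<^sup>2) * (\<Sum>b\<in>Basis. (q b)\<^sup>2) - (\<Sum>b\<in>Basis. p b * q b)\<^sup>2"
    using GG sX sY sZ by (simp add: GG_def)
  obtain i j where ij: "i \<in> Basis" "j \<in> Basis" "i \<noteq> j" "p i \<noteq> 0" "p i * q j - p j * q i \<noteq> 0"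
    "2 * ((\<Sum>b\<in>Basis. (p b)\<^sup>2) * (\<Sum>b\<in>Basis. (q b)\<^sup>2) - (\<Sum>b\<in>Basis. p b * q b)\<^sup>2) \<le> (real (card (Basis :: (real^'n) set)))\<^sup>2 * (p i * q j - p j * q i)\<^sup>2"
    "(p i * q j - p j * q i)\<^sup>2 \<le> 2 * ((\<Sum>b\<in>Basis. (p b)\<^sup>2) * (\<Sum>b\<in>Basis. (q b)\<^sup>2) - (\<Sum>b\<in>Basis. p b * q b)\<^sup>2)"
    using pair_select[OF finite_Basis Gp] by blast
  define n where "n = real CARD('n)"
  define S where "S = (norm z)\<^sup>2"
  have SXY: "S = X + Y" unfolding S_def X_def Y_def by (rule norm_z_sq)
  have S: "0 < S" using assms(3) by (simp add: S_def)
  define \<kappa> where "\<kappa> = n / S"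
  have k: "0 < \<kappa>" using S by (simp add: \<kappa>_def n_def)
  define Dm where "Dm = \<bar>p i * q j - p j * q i\<bar>"
  have Dm: "0 < Dm" using ij by (simp add: Dm_def)
  have "M_CP m z = (\<integral>\<^sup>+ f. ennreal ((\<Prod>b\<in>Basis. gw (f b)) *
     \<bar>ln (\<kappa> * ((\<Sum>b\<in>Basis. f b * p b)\<^sup>2 + (\<Sum>b\<in>Basis. f b * q b)\<^sup>2))\<bar> ^ m) \<partial>PiM Basis (\<lambda>_. lborel))"
    unfolding \<kappa>_def n_def S_def p_def q_def by (rule M_CP_eq[OF assms(3)])
  also have "\<dots> \<le> ennreal (fact m * \<kappa> * ((\<Sum>b\<in>Basis. (p b)\<^sup>2) + (\<Sum>b\<in>Basis. (q b)\<^sup>2)) / 2 + 4 * fact m / (pi * \<kappa> * \<bar>p i * q j - p j * q i\<bar>))"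
    by (rule abstract_bound[OF finite_Basis ij(1-5) k assms(2)])
  also have "\<dots> = ennreal (fact m * (n / S) * S / 2 + 4 * fact m / (pi * (n / S) * Dm))"
    unfolding sX sY SXY[symmetric] Dm_def \<kappa>_def ..
  also have "\<dots> \<le> ennreal (4 * fact m * n / (1 - tau_norm z))"
  proof (rule ennreal_leI)
    define T where "T = cmod (\<Sum>i\<in>UNIV. (z$i)^2)"
    have tau: "tau_norm z = T / S" by (simp add: tau_norm_def T_def S_def)
    have T2: "T\<^sup>2 = (X - Y)\<^sup>2 + 4 * Z\<^sup>2" unfolding T_def X_def Y_def Z_def by (rule tau_sq)
    have ST: "S\<^sup>2 - T\<^sup>2 = 4 * GG" unfolding T2 SXY GG_def by (simp add: power2_eq_square algebra_simps)
    have cardB: "real (card (Basis :: (real^'n) set)) = n" by (simp add: n_def card_Basis_vec)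
    have GD: "2 * GG \<le> n\<^sup>2 * Dm\<^sup>2" using ij(6) cardB sX sY sZ by (simp add: GG_def Dm_def)
    have DG: "Dm\<^sup>2 \<le> 2 * GG" using ij(7) sX sY sZ by (simp add: GG_def Dm_def)
    have n1: "1 \<le> n" by (simp add: n_def)
    show "fact m * (n / S) * S / 2 + 4 * fact m / (pi * (n / S) * Dm) \<le> 4 * fact m * n / (1 - tau_norm z)"
      unfolding tau by (rule final_arith[OF S _ ST GG GD DG Dm n1]) (auto simp: T_def)
  qed
  finally show ?thesis by (simp add: n_def)
qed

end
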